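(* Let $n\ge1$ and $N\ge n$. (i) For every integer $c$ with $0\le c\le\lfloor n/2\rfloor$, the dimension of the space of $S_n$-invariant homogeneous polynomials of degree $c$ on $\mathbb R^{n\times n}$ equals the dimension of the space of $S_N$-invariant homogeneous polynomials of degree $c$ on $\mathbb R^{N\times N}$. (ii) For every integer $c$ with $0\le c\le\lfloor n/2\rfloor-1$, the dimension of the space of $S_n$-equivariant polynomial maps $\mathbb R^{n\times n}\to\mathbb R^{n\times n}$ with homogeneous components of degree $c$ equals the corresponding dimension for $S_N$ acting on $\mathbb R^{N\times N}$.
   Context: $S_n$ acts on $\mathbb R^{n\times n}$ by $(g\cdot X)_{ij}=X_{g^{-1}(i),g^{-1}(j)}$. A polynomial $p$ is invariant if $p(g\cdot X)=p(X)$ for all $g$; a polynomial map $P$ is equivariant if $P(g\cdot X)=g\cdot P(X)$ for all $g$. *)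

theory Defs
  imports "HOL-Combinatorics.Permutations" "HOL-Analysis.Analysis" "HOL-Library.Function_Algebras"
begin

text \<open>Real n x n matrices are represented as functions nat => nat => real; only the
entries with indices < n are relevant. Polynomials on R^(n x n) are identified with
polynomial functions (R is infinite), i.e. elements of the real span of monomial functions.\<close>

type_synonym mat = "nat \<Rightarrow> nat \<Rightarrow> real"

definition fscale :: "real \<Rightarrow> ('a \<Rightarrow> real) \<Rightarrow> ('a \<Rightarrow> real)" where
  "fscale r f = (\<lambda>x. r * f x)"

definition mscale :: "real \<Rightarrow> ('a \<Rightarrow> mat) \<Rightarrow> ('a \<Rightarrow> mat)" where
  "mscale r F = (\<lambda>x i j. r * F x i j)"

definition exps :: "nat \<Rightarrow> nat \<Rightarrow> (nat \<times> nat \<Rightarrow> nat) set" where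
  "exps n c = {\<alpha>. (\<forall>p. p \<notin> {..<n} \<times> {..<n} \<longrightarrow> \<alpha> p = 0)
                  \<and> (\<Sum>p\<in>{..<n} \<times> {..<n}. \<alpha> p) = c}"

definition monomial_fn :: "nat \<Rightarrow> (nat \<times> nat \<Rightarrow> nat) \<Rightarrow> mat \<Rightarrow> real" where
  "monomial_fn n \<alpha> X = (\<Prod>(i,j)\<in>{..<n} \<times> {..<n}. X i j ^ \<alpha> (i,j))"

definition hom_poly :: "nat \<Rightarrow> nat \<Rightarrow> (mat \<Rightarrow> real) set" where
  "hom_poly n c = module.span fscale (monomial_fn n ` exps n c)"

definition act :: "(nat \<Rightarrow> nat) \<Rightarrow> mat \<Rightarrow> mat" where
  "act g X = (\<lambda>i j. X (inv g i) (inv g j))"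

definition invariant :: "nat \<Rightarrow> (mat \<Rightarrow> real) \<Rightarrow> bool" where
  "invariant n p \<longleftrightarrow> (\<forall>g X. g permutes {..<n} \<longrightarrow> p (act g X) = p X)"

definition equivariant :: "nat \<Rightarrow> (mat \<Rightarrow> mat) \<Rightarrow> bool" where
  "equivariant n P \<longleftrightarrow> (\<forall>g X. g permutes {..<n} \<longrightarrow> P (act g X) = act g (P X))"

definition hom_poly_map :: "nat \<Rightarrow> nat \<Rightarrow> (mat \<Rightarrow> mat) set" where
  "hom_poly_map n c = {P. (\<forall>i<n. \<forall>j<n. (\<lambda>X. P X i j) \<in> hom_poly n c)
      \<and> (\<forall>X i j. \<not> (i < n \<and> j < n) \<longrightarrow> P X i j = 0)}"

definition inv_dim :: "nat \<Rightarrow> nat \<Rightarrow> nat" where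
  "inv_dim n c = vector_space.dim fscale {p \<in> hom_poly n c. invariant n p}"

definition equiv_dim :: "nat \<Rightarrow> nat \<Rightarrow> nat" where
  "equiv_dim n c = vector_space.dim mscale {P \<in> hom_poly_map n c. equivariant n P}"

end

theory Submission
  imports Defs
begin

interpretation fs: vector_space "fscale :: real \<Rightarrow> ('a \<Rightarrow> real) \<Rightarrow> _"
  by unfold_locales (auto simp: fscale_def fun_eq_iff algebra_simps)

interpretation ms: vector_space "mscale :: real \<Rightarrow> ('a \<Rightarrow> mat) \<Rightarrow> _"
  by unfold_locales (auto simp: mscale_def fun_eq_iff algebra_simps)

definition restr :: "nat set \<Rightarrow> mat \<Rightarrow> mat" where
  "restr W X = (\<lambda>i j. if i \<in> W \<and> j \<in> W then X i j else 0)"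

lemma restr_restr: "restr A (restr B X) = restr (A \<inter> B) X"
  by (auto simp: restr_def fun_eq_iff)

lemma act_id: "act id X = X"
  by (simp add: act_def)

lemma act_comp: "bij g \<Longrightarrow> bij h \<Longrightarrow> act g (act h X) = act (g \<circ> h) X"
  by (simp add: act_def o_inv_distrib bij_is_inj)

lemma act_agree:
  assumes "bij f1" "bij f2" "\<And>x. x \<in> W \<Longrightarrow> f1 x = f2 x"
  shows "act f1 (restr W X) = act f2 (restr W X)"
proof -
  have key: "inv f1 i \<in> W \<or> inv f2 i \<in> W \<Longrightarrow> inv f1 i = inv f2 i" for i
  proof -
    have a: "f1 (inv f1 i) = i" "f2 (inv f2 i) = i"
      using assms(1,2) by (simp_all add: bij_is_surj surj_f_inv_f)
    have i1: "inv f1 (f1 x) = x" "inv f2 (f2 x) = x" for x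
      using assms(1,2) by (simp_all add: bij_is_inj inv_f_f)
    assume "inv f1 i \<in> W \<or> inv f2 i \<in> W"
    then show ?thesis
    proof
      assume "inv f1 i \<in> W"
      then have "f2 (inv f1 i) = i" using assms(3) a by metis
      then show ?thesis using i1 by metis
    next
      assume "inv f2 i \<in> W"
      then have "f1 (inv f2 i) = i" using assms(3) a by metis
      then show ?thesis using i1 by metis
    qed
  qed
  show ?thesis unfolding act_def restr_def fun_eq_iff
    using key by (metis (no_types, lifting))
qed

lemma restr_act: "bij g \<Longrightarrow> restr W (act g X) = act g (restr (inv g ` W) X)"
  unfolding act_def restr_def fun_eq_iff
  by (auto simp: bij_is_inj inj_image_mem_iff bij_imp_bij_inv)

lemma restr_act_self:
  assumes "bij h" "h ` W \<subseteq> A"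
  shows "restr A (act h (restr W X)) = act h (restr W X)"
  unfolding act_def restr_def fun_eq_iff
proof (intro allI)
  fix i j
  have "inv h i \<in> W \<Longrightarrow> i \<in> A" using assms
    by (metis bij_inv_eq_iff image_subset_iff)
  moreover have "inv h j \<in> W \<Longrightarrow> j \<in> A" using assms
    by (metis bij_inv_eq_iff image_subset_iff)
  ultimately show "(if i \<in> A \<and> j \<in> A then if inv h i \<in> W \<and> inv h j \<in> W then X (inv h i) (inv h j) else 0 else 0) =
           (if inv h i \<in> W \<and> inv h j \<in> W then X (inv h i) (inv h j) else 0)" by auto
qed

lemma perm_extend:
  assumes "finite S" "V \<subseteq> S" "inj_on f V" "f ` V \<subseteq> S"
  shows "\<exists>g. g permutes S \<and> (\<forall>x\<in>V. g x = f x)"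
proof -
  have fV: "finite V" using assms finite_subset by blast
  have c1: "card (S - V) = card S - card V" using card_Diff_subset[OF fV assms(2)] .
  have c2: "card (S - f ` V) = card S - card (f ` V)"
    using card_Diff_subset[OF finite_imageI[OF fV] assms(4)] .
  have c3: "card (f ` V) = card V" using card_image[OF assms(3)] .
  have "\<exists>k. bij_betw k (S - V) (S - f ` V)"
    by (rule finite_same_card_bij) (use assms(1) c1 c2 c3 in auto)
  then obtain k where k: "bij_betw k (S - V) (S - f ` V)" by blast
  have kx: "x \<in> S - V \<Longrightarrow> k x \<in> S - f ` V" for x using k bij_betwE by blast
  define g where "g x = (if x \<in> V then f x else if x \<in> S then k x else x)" for x
  have "g permutes S"
  proof (rule inj_imp_permutes)
    show "inj_on g S"
    proof (rule inj_onI)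
      fix x y assume xy: "x \<in> S" "y \<in> S" "g x = g y"
      show "x = y"
      proof (cases "x \<in> V"; cases "y \<in> V")
        assume "x \<in> V" "y \<in> V" then show ?thesis using xy assms(3) by (simp add: g_def inj_on_def)
      next
        assume a: "x \<in> V" "y \<notin> V" then have "k y \<in> S - f ` V" using kx xy by simp
        then show ?thesis using xy a by (force simp add: g_def)
      next
        assume a: "x \<notin> V" "y \<in> V" then have "k x \<in> S - f ` V" using kx xy by simp
        then show ?thesis using xy a by (force simp add: g_def)
      next
        assume a: "x \<notin> V" "y \<notin> V" 
        then have "k x = k y" using xy by (simp add: g_def)
        then show ?thesis using a xy k unfolding bij_betw_def inj_on_def by blast
      qed
    qed
    show "g x \<in> S" if "x \<in> S" for x
      using that assms(4) kx[of x] by (auto simp: g_def)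
    show "g x = x" if "x \<notin> S" for x using that assms(2) by (auto simp: g_def)
  qed (use assms in auto)
  then show ?thesis by (auto simp: g_def)
qed

lemma perm_into:
  assumes "W \<subseteq> {..<N}" "card W \<le> n" "n \<le> N"
  shows "\<exists>h. h permutes {..<N} \<and> h ` W \<subseteq> {..<n}"
proof -
  have "finite W" using assms finite_subset by blast
  then obtain f where f: "f ` W \<subseteq> {..<n}" "inj_on f W"
    using card_le_inj[of W "{..<n}"] assms by auto
  moreover have "f ` W \<subseteq> {..<N}" using f assms by auto
  ultimately obtain g where "g permutes {..<N}" "\<forall>x\<in>W. g x = f x"
    using perm_extend[of "{..<N}" W f] assms by blast
  then show ?thesis using f by (metis image_cong)
qed


lemma sum_fun_apply: "(\<Sum>a\<in>A. f a) x = (\<Sum>a\<in>A. f a x)"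
  by (induction A rule: infinite_finite_induct) (auto simp: plus_fun_def zero_fun_def)

definition supp_idx :: "(nat \<times> nat \<Rightarrow> nat) \<Rightarrow> nat set" where
  "supp_idx \<alpha> = fst ` {p. \<alpha> p \<noteq> 0} \<union> snd ` {p. \<alpha> p \<noteq> 0}"

lemma exps_zero: "\<alpha> \<in> exps N c \<Longrightarrow> \<alpha> p \<noteq> 0 \<Longrightarrow> p \<in> {..<N} \<times> {..<N}"
  unfolding exps_def mem_Collect_eq by metis

lemma zero_outside: "(\<And>p. p \<notin> B \<Longrightarrow> f p = 0) \<Longrightarrow> \<forall>p\<in>A - B. f p = 0"
  by auto

lemma expsI: "(\<And>p. p \<notin> {..<N} \<times> {..<N} \<Longrightarrow> \<alpha> p = 0) \<Longrightarrow> (\<Sum>p\<in>{..<N} \<times> {..<N}. \<alpha> p) = c \<Longrightarrow> \<alpha> \<in> exps N c"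
  unfolding exps_def by blast

lemma expsD: "\<alpha> \<in> exps N c \<Longrightarrow> (\<Sum>p\<in>{..<N} \<times> {..<N}. \<alpha> p) = c"
  unfolding exps_def by blast

lemma supp_sub: "\<alpha> \<in> exps N c \<Longrightarrow> supp_idx \<alpha> \<subseteq> {..<N}"
proof
  fix x assume a: "\<alpha> \<in> exps N c" and "x \<in> supp_idx \<alpha>"
  then obtain p where p: "\<alpha> p \<noteq> 0" "x = fst p \<or> x = snd p" unfolding supp_idx_def by blast
  have "p \<in> {..<N} \<times> {..<N}" using exps_zero[OF a p(1)] .
  then show "x \<in> {..<N}" using p(2) by (auto simp: mem_Times_iff)
qed

lemma supp_card:
  assumes "\<alpha> \<in> exps N c"
  shows "card (supp_idx \<alpha>) \<le> 2 * c"
proof -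
  let ?S = "{p. \<alpha> p \<noteq> 0}"
  have sub: "?S \<subseteq> {..<N} \<times> {..<N}" using exps_zero[OF assms] by blast
  have fin: "finite ?S" using sub finite_subset by blast
  have "card ?S = (\<Sum>p\<in>?S. 1)" by simp
  also have "\<dots> \<le> (\<Sum>p\<in>?S. \<alpha> p)" by (rule sum_mono) auto
  also have "\<dots> \<le> (\<Sum>p\<in>{..<N} \<times> {..<N}. \<alpha> p)" by (rule sum_mono2) (use sub in auto)
  also have "\<dots> = c" using expsD[OF assms] .
  finally have cS: "card ?S \<le> c" .
  have "card (supp_idx \<alpha>) \<le> card (fst ` ?S) + card (snd ` ?S)"
    unfolding supp_idx_def by (rule card_Un_le)
  also have "\<dots> \<le> card ?S + card ?S" using card_image_le[OF fin] add_mono by metis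
  finally show ?thesis using cS by linarith
qed

lemma mono_restr:
  assumes "\<alpha> \<in> exps N c"
  shows "monomial_fn N \<alpha> (restr W X) = (if supp_idx \<alpha> \<subseteq> W then monomial_fn N \<alpha> X else 0)"
proof (cases "supp_idx \<alpha> \<subseteq> W")
  case True
  have "restr W X i j ^ \<alpha> (i, j) = X i j ^ \<alpha> (i, j)" for i j
  proof (cases "\<alpha> (i,j) = 0")
    case False
    then have "i \<in> supp_idx \<alpha>" "j \<in> supp_idx \<alpha>" unfolding supp_idx_def by force+
    then show ?thesis using True by (auto simp: restr_def)
  qed simp
  then show ?thesis using True by (simp add: monomial_fn_def)
next
  case False
  then obtain i j where ij: "\<alpha> (i,j) \<noteq> 0" "i \<notin> W \<or> j \<notin> W"
    unfolding supp_idx_def by force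
  have "(i,j) \<in> {..<N} \<times> {..<N}" using exps_zero[OF assms ij(1)] .
  moreover have "restr W X i j ^ \<alpha> (i, j) = 0" using ij by (auto simp: restr_def)
  ultimately have "monomial_fn N \<alpha> (restr W X) = 0"
    unfolding monomial_fn_def by (intro prod_zero) (auto intro!: bexI[of _ "(i,j)"])
  then show ?thesis using False by simp
qed

lemma mono_mono:
  assumes "n \<le> N" "\<alpha> \<in> exps n c"
  shows "\<alpha> \<in> exps N c" "monomial_fn N \<alpha> = monomial_fn n \<alpha>"
proof -
  have sub: "{..<n} \<times> {..<n} \<subseteq> {..<N} \<times> {..<N}" using assms(1) by auto
  have z: "\<alpha> p = 0" if "p \<notin> {..<n} \<times> {..<n}" for p using exps_zero[OF assms(2), of p] that by argo
  have "(\<Sum>p\<in>{..<N} \<times> {..<N}. \<alpha> p) = (\<Sum>p\<in>{..<n} \<times> {..<n}. \<alpha> p)"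
    by (rule sum.mono_neutral_right[OF _ sub zero_outside[OF z]]) simp
  note se = this
  show "\<alpha> \<in> exps N c"
  proof (rule expsI)
    fix p assume "p \<notin> {..<N} \<times> {..<N}"
    then have "p \<notin> {..<n} \<times> {..<n}" using subsetD[OF sub, of p] by argo
    then show "\<alpha> p = 0" by (rule z)
  qed (use se expsD[OF assms(2)] in simp)
  show "monomial_fn N \<alpha> = monomial_fn n \<alpha>"
    unfolding monomial_fn_def fun_eq_iff
  proof (intro allI prod.mono_neutral_right)
    fix X
    show "\<forall>p\<in>{..<N} \<times> {..<N} - {..<n} \<times> {..<n}. (case p of (i, j) \<Rightarrow> X i j ^ \<alpha> (i, j)) = 1"
    proof
      fix p assume "p \<in> {..<N} \<times> {..<N} - {..<n} \<times> {..<n}"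
      then have "\<alpha> p = 0" using z[of p] by simp
      then show "(case p of (i, j) \<Rightarrow> X i j ^ \<alpha> (i, j)) = 1" by (cases p) simp
    qed
  qed (simp, rule sub)
qed

lemma exps_restrict:
  assumes "\<alpha> \<in> exps N c" "supp_idx \<alpha> \<subseteq> {..<n}" "n \<le> N"
  shows "\<alpha> \<in> exps n c"
proof -
  have z: "\<alpha> p = 0" if "p \<notin> {..<n} \<times> {..<n}" for p
  proof (rule ccontr)
    assume "\<alpha> p \<noteq> 0"
    then have "fst p \<in> supp_idx \<alpha>" "snd p \<in> supp_idx \<alpha>" unfolding supp_idx_def by auto
    then show False using that assms(2) by (auto simp: mem_Times_iff)
  qed
  have sub: "{..<n} \<times> {..<n} \<subseteq> {..<N} \<times> {..<N}" using assms(3) by auto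
  have "(\<Sum>p\<in>{..<N} \<times> {..<N}. \<alpha> p) = (\<Sum>p\<in>{..<n} \<times> {..<n}. \<alpha> p)"
    by (rule sum.mono_neutral_right[OF _ sub zero_outside[OF z]]) simp
  note se = this
  show ?thesis
  proof (rule expsI)
    fix p assume "p \<notin> {..<n} \<times> {..<n}"
    then show "\<alpha> p = 0" by (rule z)
  qed (use se expsD[OF assms(1)] in simp)
qed

lemma mono_act:
  assumes h: "h permutes {..<N}" and a: "\<alpha> \<in> exps N c"
  defines "\<beta> \<equiv> (\<lambda>p. \<alpha> (h (fst p), h (snd p)))"
  shows "\<beta> \<in> exps N c" "monomial_fn N \<alpha> (act h X) = monomial_fn N \<beta> X"
proof -
  have bh: "bij_betw h {..<N} {..<N}" using permutes_imp_bij[OF h] .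
  have bp: "bij_betw (map_prod h h) ({..<N} \<times> {..<N}) ({..<N} \<times> {..<N})"
    by (rule bij_betw_map_prod[OF bh bh])
  have hout: "h x = x" if "x \<notin> {..<N}" for x using permutes_not_in[OF h that] .
  have hin: "h x \<in> {..<N} \<longleftrightarrow> x \<in> {..<N}" for x using h by (metis hout permutes_in_image)
  have z: "\<beta> p = 0" if "p \<notin> {..<N} \<times> {..<N}" for p
  proof (cases p)
    case (Pair i j)
    then have "(h i, h j) \<notin> {..<N} \<times> {..<N}" using that hin by simp
    then have "\<alpha> (h i, h j) = 0" using exps_zero[OF a, of "(h i, h j)"] by argo
    then show ?thesis using Pair by (simp add: \<beta>_def)
  qed
  have "(\<Sum>p\<in>{..<N} \<times> {..<N}. \<beta> p) = (\<Sum>p\<in>{..<N} \<times> {..<N}. \<alpha> (map_prod h h p))"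
    unfolding \<beta>_def by (rule sum.cong) auto
  also have "\<dots> = (\<Sum>p\<in>{..<N} \<times> {..<N}. \<alpha> p)"
    by (rule sum.reindex_bij_betw[OF bp])
  finally have se: "(\<Sum>p\<in>{..<N} \<times> {..<N}. \<beta> p) = c" using expsD[OF a] by simp
  show "\<beta> \<in> exps N c" by (rule expsI[OF z se])
  have ih: "inv h (h x) = x" for x using h by (simp add: permutes_inverses(2))
  have "monomial_fn N \<alpha> (act h X) = (\<Prod>p\<in>{..<N} \<times> {..<N}. X (inv h (fst p)) (inv h (snd p)) ^ \<alpha> p)"
    unfolding monomial_fn_def act_def by (rule prod.cong) auto
  also have "\<dots> = (\<Prod>p\<in>{..<N} \<times> {..<N}. X (inv h (fst (map_prod h h p))) (inv h (snd (map_prod h h p))) ^ \<alpha> (map_prod h h p))"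
    by (rule prod.reindex_bij_betw[OF bp, symmetric])
  also have "\<dots> = monomial_fn N \<beta> X"
    unfolding monomial_fn_def \<beta>_def by (rule prod.cong) (auto simp: ih)
  finally show "monomial_fn N \<alpha> (act h X) = monomial_fn N \<beta> X" .
qed

lemma mono_in: "\<alpha> \<in> exps N c \<Longrightarrow> monomial_fn N \<alpha> \<in> hom_poly N c"
  unfolding hom_poly_def by (rule fs.span_base) auto

lemma zero_in: "(\<lambda>X. 0) \<in> hom_poly N c"
  unfolding hom_poly_def using fs.span_zero by (simp add: zero_fun_def)

lemma hom_poly_induct:
  assumes "p \<in> hom_poly N c" "P (\<lambda>X. 0)"
    "\<And>a x y. x \<in> monomial_fn N ` exps N c \<Longrightarrow> P y \<Longrightarrow> P (\<lambda>X. a * x X + y X)"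
  shows "P p"
  using assms(1) unfolding hom_poly_def
proof (induction rule: fs.span_induct_alt)
  case base then show ?case using assms(2) by (simp add: zero_fun_def)
next
  case (step c x y) then show ?case using assms(3)[of x y c] by (simp add: fscale_def plus_fun_def)
qed

lemma hom_poly_lin: "x \<in> hom_poly N c \<Longrightarrow> y \<in> hom_poly N c \<Longrightarrow> (\<lambda>X. a * x X + y X) \<in> hom_poly N c"
  unfolding hom_poly_def using fs.span_add fs.span_scale
  by (metis (no_types, lifting) ext fscale_def plus_fun_def)

lemma hom_poly_scale: "x \<in> hom_poly N c \<Longrightarrow> (\<lambda>X. a * x X) \<in> hom_poly N c"
  using hom_poly_lin[OF _ zero_in] by simp

lemma hom_poly_sum: "(\<And>a. a \<in> A \<Longrightarrow> (\<lambda>X. f a X) \<in> hom_poly N c) \<Longrightarrow> (\<lambda>X. \<Sum>a\<in>A. f a X) \<in> hom_poly N c"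
proof (induction A rule: infinite_finite_induct)
  case (insert x F)
  then show ?case using hom_poly_lin[of "\<lambda>X. f x X" N c "\<lambda>X. \<Sum>a\<in>F. f a X" 1] by simp
qed (use zero_in in auto)

lemma hom_poly_comp:
  assumes "p \<in> hom_poly N c" "\<And>\<alpha>. \<alpha> \<in> exps N c \<Longrightarrow> (\<lambda>X. monomial_fn N \<alpha> (\<sigma> X)) \<in> hom_poly M c"
  shows "(\<lambda>X. p (\<sigma> X)) \<in> hom_poly M c"
proof (rule hom_poly_induct[OF assms(1), where P="\<lambda>q. (\<lambda>X. q (\<sigma> X)) \<in> hom_poly M c"])
  show "(\<lambda>X. (\<lambda>X. 0) (\<sigma> X)) \<in> hom_poly M c" using zero_in by simp
next
  fix a x y assume "x \<in> monomial_fn N ` exps N c" and IH: "(\<lambda>X. y (\<sigma> X)) \<in> hom_poly M c"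
  then obtain \<alpha> where "\<alpha> \<in> exps N c" "x = monomial_fn N \<alpha>" by blast
  then have "(\<lambda>X. x (\<sigma> X)) \<in> hom_poly M c" using assms(2) by blast
  from hom_poly_lin[OF this IH] show "(\<lambda>X. (\<lambda>X. a * x X + y X) (\<sigma> X)) \<in> hom_poly M c" by simp
qed

lemma H1:
  assumes "n \<le> N"
  shows "hom_poly n c \<subseteq> hom_poly N c"
proof -
  have "monomial_fn n ` exps n c \<subseteq> monomial_fn N ` exps N c"
  proof
    fix f assume "f \<in> monomial_fn n ` exps n c"
    then obtain \<alpha> where a: "\<alpha> \<in> exps n c" "f = monomial_fn n \<alpha>" by blast
    then have "f = monomial_fn N \<alpha>" "\<alpha> \<in> exps N c" using mono_mono[OF assms a(1)] by simp_all
    then show "f \<in> monomial_fn N ` exps N c" by (rule image_eqI)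
  qed
  then show ?thesis unfolding hom_poly_def by (rule fs.span_mono)
qed

lemma H2:
  assumes "p \<in> hom_poly N c"
  shows "(\<lambda>X. p (restr W X)) \<in> hom_poly N c"
proof (rule hom_poly_comp[OF assms, of "restr W"])
  fix \<alpha> assume a: "\<alpha> \<in> exps N c"
  show "(\<lambda>X. monomial_fn N \<alpha> (restr W X)) \<in> hom_poly N c"
  proof (cases "supp_idx \<alpha> \<subseteq> W")
    case True
    then have "(\<lambda>X. monomial_fn N \<alpha> (restr W X)) = monomial_fn N \<alpha>"
      using mono_restr[OF a] by presburger
    then show ?thesis using mono_in[OF a] by simp
  next
    case False
    then have "(\<lambda>X. monomial_fn N \<alpha> (restr W X)) = (\<lambda>X. 0)"
      using mono_restr[OF a] by presburger
    then show ?thesis using zero_in by simp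
  qed
qed

lemma H3:
  assumes "p \<in> hom_poly N c" and h: "h permutes {..<N}"
  shows "(\<lambda>X. p (act h X)) \<in> hom_poly N c"
proof (rule hom_poly_comp[OF assms(1), of "act h"])
  fix \<alpha> assume a: "\<alpha> \<in> exps N c"
  have "(\<lambda>X. monomial_fn N \<alpha> (act h X)) = monomial_fn N (\<lambda>p. \<alpha> (h (fst p), h (snd p)))"
    using mono_act(2)[OF h a] by blast
  then show "(\<lambda>X. monomial_fn N \<alpha> (act h X)) \<in> hom_poly N c"
    using mono_in[OF mono_act(1)[OF h a]] by simp
qed

lemma H4:
  assumes "n \<le> N" "p \<in> hom_poly N c"
  shows "(\<lambda>X. p (restr {..<n} X)) \<in> hom_poly n c"
proof (rule hom_poly_comp[OF assms(2), of "restr {..<n}"])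
  fix \<alpha> assume a: "\<alpha> \<in> exps N c"
  show "(\<lambda>X. monomial_fn N \<alpha> (restr {..<n} X)) \<in> hom_poly n c"
  proof (cases "supp_idx \<alpha> \<subseteq> {..<n}")
    case True
    then have "\<alpha> \<in> exps n c" using exps_restrict a assms(1) by blast
    then show ?thesis using True a mono_restr mono_mono[OF assms(1)] mono_in by auto
  qed (use a mono_restr zero_in in auto)
qed

lemma H5:
  assumes "p \<in> hom_poly n c"
  shows "p (restr {..<n} X) = p X"
proof -
  have "\<forall>X. p (restr {..<n} X) = p X"
  proof (rule hom_poly_induct[OF assms, where P="\<lambda>q. \<forall>X. q (restr {..<n} X) = q X"])
    fix a x and y :: "mat \<Rightarrow> real" assume x: "x \<in> monomial_fn n ` exps n c" and IH: "\<forall>X. y (restr {..<n} X) = y X"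
    then obtain \<alpha> where "\<alpha> \<in> exps n c" "x = monomial_fn n \<alpha>" by blast
    then have "x (restr {..<n} X) = x X" for X using mono_restr supp_sub by metis
    then show "\<forall>X. (\<lambda>X. a * x X + y X) (restr {..<n} X) = (\<lambda>X. a * x X + y X) X" using IH by simp
  qed simp
  then show ?thesis by blast
qed


definition TT :: "nat \<Rightarrow> nat \<Rightarrow> nat set set" where
  "TT N c = {T. T \<subseteq> {..<N} \<and> card T \<le> 2 * c}"

lemma TT_finite: "finite (TT N c)"
  by (rule finite_subset[of _ "Pow {..<N}"]) (auto simp: TT_def)

lemma TT_fin_elem: "T \<in> TT N c \<Longrightarrow> finite T"
  unfolding TT_def using finite_subset by blast

definition mob :: "nat \<Rightarrow> nat \<Rightarrow> nat set \<Rightarrow> (mat \<Rightarrow> real) \<Rightarrow> mat \<Rightarrow> real" where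
  "mob N c B f X = (\<Sum>T\<in>TT N c. \<Sum>U\<in>Pow T. (-1) ^ card (T - U) * f (restr (U \<union> B) X))"

lemma alt_sum: "finite A \<Longrightarrow> (\<Sum>V\<in>Pow A. (-1::real) ^ card V) = (if A = {} then 1 else 0)"
proof (induction A rule: finite_induct)
  case (insert a A)
  have inj: "inj_on (insert a) (Pow A)" using insert(2) by (auto simp: inj_on_def)
  have d: "Pow A \<inter> insert a ` Pow A = {}" using insert(2) by auto
  have "(\<Sum>V\<in>Pow (insert a A). (-1::real) ^ card V)
      = (\<Sum>V\<in>Pow A. (-1::real) ^ card V) + (\<Sum>V\<in>insert a ` Pow A. (-1::real) ^ card V)"
    unfolding Pow_insert using insert(1) d by (intro sum.union_disjoint) auto
  also have "(\<Sum>V\<in>insert a ` Pow A. (-1::real) ^ card V) = (\<Sum>V\<in>Pow A. (-1::real) ^ card (insert a V))"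
    using sum.reindex[OF inj] by simp
  also have "\<dots> = (\<Sum>V\<in>Pow A. - ((-1::real) ^ card V))"
  proof (rule sum.cong)
    fix V assume "V \<in> Pow A"
    then have "finite V" "a \<notin> V" using insert finite_subset by auto
    then show "(-1::real) ^ card (insert a V) = - ((-1) ^ card V)" by simp
  qed simp
  finally show ?case by (simp add: sum_negf)
qed simp

lemma mob_comb:
  assumes "finite T"
  shows "(\<Sum>U\<in>Pow T. (-1::real) ^ card (T - U) * (if D \<subseteq> U then 1 else 0)) = (if T = D then 1 else 0)"
proof (cases "D \<subseteq> T")
  case False
  then have "\<forall>U\<in>Pow T. \<not> D \<subseteq> U" by auto
  then show ?thesis using False by auto
next
  case True
  have "(\<Sum>U\<in>Pow T. (-1::real) ^ card (T - U) * (if D \<subseteq> U then 1 else 0))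
      = (\<Sum>U\<in>{U\<in>Pow T. D \<subseteq> U}. (-1::real) ^ card (T - U))"
    by (simp add: sum.inter_filter[symmetric] assms if_distrib cong: if_cong)
  also have "\<dots> = (\<Sum>V\<in>Pow (T - D). (-1::real) ^ card V)"
  proof (rule sum.reindex_bij_witness[of _ "\<lambda>V. T - V" "\<lambda>U. T - U"])
    fix U assume "U \<in> {U\<in>Pow T. D \<subseteq> U}" then show "T - (T - U) = U" "T - U \<in> Pow (T - D)" by auto
  next
    fix V assume V: "V \<in> Pow (T - D)"
    have e: "T - (T - V) = V" using V by auto
    show "T - (T - V) = V" by (rule e)
    show "T - V \<in> {U\<in>Pow T. D \<subseteq> U}" using V True by auto
  qed simp
  also have "\<dots> = (if T - D = {} then 1 else 0)" by (rule alt_sum) (use assms in simp)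
  finally show ?thesis using True by auto
qed

lemma mob_mono:
  assumes a: "\<alpha> \<in> exps N c"
  shows "mob N c B (monomial_fn N \<alpha>) X = monomial_fn N \<alpha> X"
proof -
  let ?D = "supp_idx \<alpha> - B"
  have e: "(supp_idx \<alpha> \<subseteq> U \<union> B) = (?D \<subseteq> U)" for U by auto
  have "mob N c B (monomial_fn N \<alpha>) X
     = (\<Sum>T\<in>TT N c. monomial_fn N \<alpha> X * (\<Sum>U\<in>Pow T. (-1::real) ^ card (T - U) * (if ?D \<subseteq> U then 1 else 0)))"
    unfolding mob_def mono_restr[OF a] e by (simp add: sum_distrib_left if_distrib mult.commute cong: if_cong)
  also have "\<dots> = (\<Sum>T\<in>TT N c. monomial_fn N \<alpha> X * (if T = ?D then 1 else 0))"
    by (rule sum.cong) (auto simp: mob_comb TT_fin_elem)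
  also have "\<dots> = monomial_fn N \<alpha> X"
  proof -
    have "?D \<in> TT N c"
    proof -
      have "finite (supp_idx \<alpha>)" using supp_sub[OF a] finite_subset by blast
      then have "card ?D \<le> card (supp_idx \<alpha>)" by (intro card_mono) auto
      then show ?thesis using supp_card[OF a] supp_sub[OF a] unfolding TT_def by auto
    qed
    then show ?thesis by (simp add: if_distrib TT_finite cong: if_cong)
  qed
  finally show ?thesis .
qed

lemma mob_hom:
  assumes "f \<in> hom_poly N c"
  shows "mob N c B f X = f X"
proof -
  have "\<forall>X. mob N c B f X = f X"
  proof (rule hom_poly_induct[OF assms, where P="\<lambda>q. \<forall>X. mob N c B q X = q X"])
    show "\<forall>X. mob N c B (\<lambda>X. 0) X = 0" by (simp add: mob_def)
  next
    fix a x y assume "x \<in> monomial_fn N ` exps N c" and IH: "\<forall>X. mob N c B y X = y X"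
    then obtain \<alpha> where "\<alpha> \<in> exps N c" "x = monomial_fn N \<alpha>" by blast
    then have mx: "mob N c B x X = x X" for X using mob_mono by blast
    show "\<forall>X. mob N c B (\<lambda>X. a * x X + y X) X = a * x X + y X"
    proof
      fix X
      have "mob N c B (\<lambda>X. a * x X + y X) X = a * mob N c B x X + mob N c B y X"
        unfolding mob_def by (simp add: sum.distrib sum_distrib_left algebra_simps)
      then show "mob N c B (\<lambda>X. a * x X + y X) X = a * x X + y X" using mx IH by simp
    qed
  qed
  then show ?thesis by blast
qed


lemma transport_perm:
  assumes "n \<le> N" "h1 permutes {..<N}" "h2 permutes {..<N}" "h1 ` W \<subseteq> {..<n}" "h2 ` W \<subseteq> {..<n}"
  shows "\<exists>g. g permutes {..<n} \<and> (\<forall>X. act h2 (restr W X) = act g (act h1 (restr W X)))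
              \<and> (\<forall>w\<in>W. g (h1 w) = h2 w)"
proof -
  have i1: "inv h1 (h1 x) = x" for x using permutes_inverses(2)[OF assms(2)] .
  have inj1: "inj h1" "inj h2" using permutes_inj[OF assms(2)] permutes_inj[OF assms(3)] by auto
  have "inj_on (h2 \<circ> inv h1) (h1 ` W)"
  proof (rule inj_onI)
    fix x y assume "x \<in> h1 ` W" "y \<in> h1 ` W" and e: "(h2 \<circ> inv h1) x = (h2 \<circ> inv h1) y"
    then obtain a b where ab: "x = h1 a" "y = h1 b" by blast
    then have "h2 a = h2 b" using e i1 by simp
    then have "a = b" using injD[OF inj1(2)] by blast
    then show "x = y" using ab by simp
  qed
  moreover have "(h2 \<circ> inv h1) ` (h1 ` W) = h2 ` W" using i1 by (simp add: image_comp o_def)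
  then have "(h2 \<circ> inv h1) ` (h1 ` W) \<subseteq> {..<n}" using assms(5) by simp
  ultimately obtain g where g: "g permutes {..<n}" "\<forall>x\<in>h1 ` W. g x = (h2 \<circ> inv h1) x"
    using perm_extend[of "{..<n}" "h1 ` W" "h2 \<circ> inv h1"] assms(4) by blast
  then have gw: "\<forall>w\<in>W. g (h1 w) = h2 w" using i1 by auto
  have bg: "bij g" "bij h1" "bij h2" using permutes_bij[OF g(1)] permutes_bij[OF assms(2)] permutes_bij[OF assms(3)] by auto
  have "act h2 (restr W X) = act g (act h1 (restr W X))" for X
  proof -
    have "act h2 (restr W X) = act (g \<circ> h1) (restr W X)"
      by (rule act_agree) (use bg gw in \<open>auto intro: bij_comp\<close>)
    then show ?thesis using act_comp bg by metis
  qed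
  then show ?thesis using g gw by blast
qed

lemma transport_inv:
  assumes "invariant n p" "n \<le> N" "h1 permutes {..<N}" "h2 permutes {..<N}" "h1 ` W \<subseteq> {..<n}" "h2 ` W \<subseteq> {..<n}"
  shows "p (act h1 (restr W X)) = p (act h2 (restr W X))"
proof -
  obtain g where g: "g permutes {..<n}" "act h2 (restr W X) = act g (act h1 (restr W X))"
    using transport_perm[OF assms(2-6)] by blast
  then show ?thesis using assms(1) unfolding invariant_def by metis
qed

lemma transport_eq:
  assumes "equivariant n Q" "n \<le> N" "h1 permutes {..<N}" "h2 permutes {..<N}" "h1 ` W \<subseteq> {..<n}" "h2 ` W \<subseteq> {..<n}"
    "i \<in> W" "j \<in> W"
  shows "Q (act h1 (restr W X)) (h1 i) (h1 j) = Q (act h2 (restr W X)) (h2 i) (h2 j)"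
proof -
  obtain g where g: "g permutes {..<n}" "act h2 (restr W X) = act g (act h1 (restr W X))"
     "\<forall>w\<in>W. g (h1 w) = h2 w"
    using transport_perm[OF assms(2-6)] by blast
  have ig: "inv g (g x) = x" for x using permutes_inverses(2)[OF g(1)] .
  have "Q (act h2 (restr W X)) (h2 i) (h2 j) = act g (Q (act h1 (restr W X))) (g (h1 i)) (g (h1 j))"
    using assms(1) g assms(7,8) unfolding equivariant_def by metis
  also have "\<dots> = Q (act h1 (restr W X)) (h1 i) (h1 j)" by (simp add: act_def ig)
  finally show ?thesis by simp
qed

definition tr :: "nat \<Rightarrow> nat \<Rightarrow> nat set \<Rightarrow> nat \<Rightarrow> nat" where
  "tr n N W = (SOME h. h permutes {..<N} \<and> h ` W \<subseteq> {..<n})"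

lemma tr_prop:
  assumes "W \<subseteq> {..<N}" "card W \<le> n" "n \<le> N"
  shows "tr n N W permutes {..<N}" "tr n N W ` W \<subseteq> {..<n}"
  using someI_ex[OF perm_into[OF assms]] unfolding tr_def by blast+

lemma TU_prop: "T \<in> TT N c \<Longrightarrow> U \<in> Pow T \<Longrightarrow> U \<subseteq> {..<N} \<and> card U \<le> 2 * c"
  unfolding TT_def using card_mono[of T U] finite_subset[of T "{..<N}"] by auto

lemma reindex_TT:
  assumes k: "k permutes {..<N}"
  shows "(\<Sum>T\<in>TT N c. \<Sum>U\<in>Pow T. G (k ` T) (k ` U)) = (\<Sum>T\<in>TT N c. \<Sum>U\<in>Pow T. G T U)"
proof -
  have injk: "inj k" using permutes_inj[OF k] .
  have kk: "k (inv k x) = x" "inv k (k x) = x" for x using permutes_inverses[OF k] by auto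
  have im1: "inv k ` (k ` A) = A" "k ` (inv k ` A) = A" for A
    by (simp_all add: image_comp o_def kk)
  have inner: "(\<Sum>U\<in>Pow T. G (k ` T) (k ` U)) = (\<Sum>U\<in>Pow (k ` T). G (k ` T) U)" for T
  proof -
    have "(\<Sum>U\<in>Pow (k ` T). G (k ` T) U) = (\<Sum>U\<in>image k ` Pow T. G (k ` T) U)"
      using image_Pow_surj[of k T "k ` T"] by simp
    also have "\<dots> = (\<Sum>U\<in>Pow T. G (k ` T) (k ` U))"
      using sum.reindex[OF inj_on_image_Pow[OF inj_on_subset[OF injk subset_UNIV]], of "G (k ` T)"]
      by (simp add: o_def)
    finally show ?thesis by simp
  qed
  have TTk: "k ` T \<in> TT N c \<longleftrightarrow> T \<in> TT N c" for T
  proof -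
    have "k ` T \<subseteq> {..<N} \<longleftrightarrow> T \<subseteq> {..<N}" using k
      by (metis permutes_image permutes_inj image_subset_iff inj_image_subset_iff)
    moreover have "card (k ` T) = card T" using injk by (simp add: card_image inj_on_subset)
    ultimately show ?thesis unfolding TT_def by simp
  qed
  have "(\<Sum>T\<in>TT N c. \<Sum>U\<in>Pow T. G (k ` T) (k ` U)) = (\<Sum>T\<in>TT N c. \<Sum>U\<in>Pow (k ` T). G (k ` T) U)"
    using inner by simp
  also have "\<dots> = (\<Sum>T\<in>TT N c. \<Sum>U\<in>Pow T. G T U)"
  proof (rule sum.reindex_bij_witness[of _ "image (inv k)" "image k"])
    fix a assume a: "a \<in> TT N c"
    show "inv k ` k ` a = a" by (rule im1(1))
    show "k ` a \<in> TT N c" using TTk a by simp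
  next
    fix b assume b: "b \<in> TT N c"
    show "k ` inv k ` b = b" by (rule im1(2))
    show "inv k ` b \<in> TT N c" using TTk[of "inv k ` b"] im1(2)[of b] b by simp
  qed simp
  finally show ?thesis .
qed


definition Vinv :: "nat \<Rightarrow> nat \<Rightarrow> (mat \<Rightarrow> real) set" where
  "Vinv n c = {p \<in> hom_poly n c. invariant n p}"

definition Rinv :: "nat \<Rightarrow> (mat \<Rightarrow> real) \<Rightarrow> mat \<Rightarrow> real" where
  "Rinv n P X = P (restr {..<n} X)"

definition Einv :: "nat \<Rightarrow> nat \<Rightarrow> nat \<Rightarrow> (mat \<Rightarrow> real) \<Rightarrow> mat \<Rightarrow> real" where
  "Einv n N c p X = (\<Sum>T\<in>TT N c. \<Sum>U\<in>Pow T. (-1) ^ card (T - U) * p (act (tr n N U) (restr U X)))"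

lemma perm_inv_image: "g permutes S \<Longrightarrow> inv g ` S = S"
  using permutes_image[OF permutes_inv] by blast

lemma card_img_diff: "inj k \<Longrightarrow> card (k ` T - k ` U) = card (T - U)"
  by (metis card_image image_set_diff inj_on_subset subset_UNIV)

lemma Rinv_in:
  assumes "n \<le> N" "P \<in> Vinv N c"
  shows "Rinv n P \<in> Vinv n c"
proof -
  have "Rinv n P \<in> hom_poly n c" using H4[OF assms(1)] assms(2) by (simp add: Vinv_def Rinv_def[abs_def])
  moreover have "invariant n (Rinv n P)"
    unfolding invariant_def
  proof (intro allI impI)
    fix g X assume g: "g permutes {..<n}"
    then have gN: "g permutes {..<N}" using permutes_subset assms(1) by fastforce
    have "restr {..<n} (act g X) = act g (restr {..<n} X)"
      using restr_act[of g "{..<n}" X] perm_inv_image[OF g] permutes_bij[OF g] by simp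
    then show "Rinv n P (act g X) = Rinv n P X"
      using assms(2) gN unfolding Rinv_def Vinv_def invariant_def by simp
  qed
  ultimately show ?thesis by (simp add: Vinv_def)
qed

lemma Einv_in:
  assumes "2 * c \<le> n" "n \<le> N" "p \<in> Vinv n c"
  shows "Einv n N c p \<in> Vinv N c"
proof -
  have pN: "p \<in> hom_poly N c" using assms H1 by (auto simp: Vinv_def)
  have pinv: "invariant n p" using assms by (simp add: Vinv_def)
  have trp: "tr n N U permutes {..<N}" "tr n N U ` U \<subseteq> {..<n}" if "T \<in> TT N c" "U \<in> Pow T" for T U
    using tr_prop[of U N n] TU_prop[OF that] assms by auto
  have "Einv n N c p \<in> hom_poly N c"
    unfolding Einv_def[abs_def]
    by (intro hom_poly_sum hom_poly_scale H2[of "\<lambda>Y. p (act _ Y)"] H3[OF pN]) (use trp in auto)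
  moreover have "invariant N (Einv n N c p)"
    unfolding invariant_def
  proof (intro allI impI)
    fix g X assume g: "g permutes {..<N}"
    have bg: "bij g" using permutes_bij[OF g] .
    have ig: "inv g permutes {..<N}" using permutes_inv[OF g] .
    define F where "F U = p (act (tr n N U) (restr U X))" for U
    have tm: "p (act (tr n N U) (restr U (act g X))) = F (inv g ` U)" if "T \<in> TT N c" "U \<in> Pow T" for T U
    proof -
      have U: "U \<subseteq> {..<N}" "card U \<le> 2 * c" using TU_prop[OF that] by auto
      have U': "inv g ` U \<subseteq> {..<N}" "card (inv g ` U) \<le> n"
        using U perm_inv_image[OF g] assms card_image_le[of U "inv g"] finite_subset[of U "{..<N}"]
        by auto
      have "p (act (tr n N U) (restr U (act g X))) = p (act (tr n N U) (act g (restr (inv g ` U) X)))"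
        using restr_act[OF bg] by simp
      also have "\<dots> = p (act (tr n N U \<circ> g) (restr (inv g ` U) X))"
        using act_comp[OF permutes_bij[OF trp(1)[OF that]] bg] by simp
      also have "\<dots> = F (inv g ` U)" unfolding F_def
      proof (rule transport_inv[OF pinv assms(2)])
        show "tr n N U \<circ> g permutes {..<N}" using permutes_compose[OF g trp(1)[OF that]] .
        show "(tr n N U \<circ> g) ` inv g ` U \<subseteq> {..<n}"
          using trp(2)[OF that] by (auto simp: image_comp permutes_inverses(1)[OF g])
        show "tr n N (inv g ` U) permutes {..<N}" "tr n N (inv g ` U) ` inv g ` U \<subseteq> {..<n}"
          using tr_prop[OF U'] assms by auto
      qed
      finally show ?thesis .
    qed
    have injig: "inj (inv g)" using permutes_inj[OF ig] .
    have "Einv n N c p (act g X) = (\<Sum>T\<in>TT N c. \<Sum>U\<in>Pow T. (-1) ^ card (inv g ` T - inv g ` U) * F (inv g ` U))"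
      unfolding Einv_def using tm card_img_diff[OF injig] by (intro sum.cong) auto
    also have "\<dots> = (\<Sum>T\<in>TT N c. \<Sum>U\<in>Pow T. (-1) ^ card (T - U) * F U)"
      by (rule reindex_TT[OF ig, where G="\<lambda>T U. (-1) ^ card (T - U) * F U"])
    also have "\<dots> = Einv n N c p X" unfolding Einv_def F_def by simp
    finally show "Einv n N c p (act g X) = Einv n N c p X" .
  qed
  ultimately show ?thesis by (simp add: Vinv_def)
qed

lemma RE_inv:
  assumes "2 * c \<le> n" "n \<le> N" "p \<in> Vinv n c"
  shows "Rinv n (Einv n N c p) = p"
proof
  fix X
  have pN: "p \<in> hom_poly N c" and pn: "p \<in> hom_poly n c" using assms H1 by (auto simp: Vinv_def)
  have pinv: "invariant n p" using assms by (simp add: Vinv_def)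
  have "Rinv n (Einv n N c p) X
      = (\<Sum>T\<in>TT N c. \<Sum>U\<in>Pow T. (-1) ^ card (T - U) * p (restr (U \<union> {}) (restr {..<n} X)))"
    unfolding Rinv_def Einv_def
  proof (intro sum.cong refl)
    fix T U assume TU: "T \<in> TT N c" "U \<in> Pow T"
    have U: "U \<subseteq> {..<N}" "card U \<le> n" using TU_prop[OF TU] assms by auto
    have "p (act (tr n N U) (restr U (restr {..<n} X))) = p (act (tr n N U) (restr (U \<inter> {..<n}) X))"
      by (simp add: restr_restr)
    also have "\<dots> = p (act id (restr (U \<inter> {..<n}) X))"
      by (rule transport_inv[OF pinv assms(2)]) (use tr_prop[OF U assms(2)] in auto)
    also have "\<dots> = p (restr (U \<union> {}) (restr {..<n} X))" by (simp add: act_id restr_restr)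
    finally show "(-1) ^ card (T - U) * p (act (tr n N U) (restr U (restr {..<n} X)))
        = (-1) ^ card (T - U) * p (restr (U \<union> {}) (restr {..<n} X))" by simp
  qed
  also have "\<dots> = p (restr {..<n} X)" using mob_hom[OF pN, of "{}"] unfolding mob_def by simp
  also have "\<dots> = p X" using H5[OF pn] .
  finally show "Rinv n (Einv n N c p) X = p X" .
qed

lemma ER_inv:
  assumes "2 * c \<le> n" "n \<le> N" "P \<in> Vinv N c"
  shows "Einv n N c (Rinv n P) = P"
proof
  fix X
  have PN: "P \<in> hom_poly N c" and Pinv: "invariant N P" using assms by (auto simp: Vinv_def)
  have "Einv n N c (Rinv n P) X
      = (\<Sum>T\<in>TT N c. \<Sum>U\<in>Pow T. (-1) ^ card (T - U) * P (restr (U \<union> {}) X))"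
    unfolding Rinv_def Einv_def
  proof (intro sum.cong refl)
    fix T U assume TU: "T \<in> TT N c" "U \<in> Pow T"
    have U: "U \<subseteq> {..<N}" "card U \<le> n" using TU_prop[OF TU] assms by auto
    note tp = tr_prop[OF U assms(2)]
    have "P (restr {..<n} (act (tr n N U) (restr U X))) = P (act (tr n N U) (restr U X))"
      using restr_act_self[OF permutes_bij[OF tp(1)] tp(2)] by simp
    also have "\<dots> = P (restr U X)" using Pinv tp(1) unfolding invariant_def by blast
    finally show "(-1) ^ card (T - U) * P (restr {..<n} (act (tr n N U) (restr U X)))
        = (-1) ^ card (T - U) * P (restr (U \<union> {}) X)" by simp
  qed
  also have "\<dots> = P X" using mob_hom[OF PN, of "{}"] unfolding mob_def by simp
  finally show "Einv n N c (Rinv n P) X = P X" .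
qed


lemma (in Vector_Spaces.linear) dim_image_eq_gen:
  assumes fi: "inj_on f (vs1.span S)"
  shows "vs2.dim (f ` S) = vs1.dim S"
proof -
  obtain B where B: "B \<subseteq> S" "vs1.independent B" "S \<subseteq> vs1.span B" "card B = vs1.dim S"
    using vs1.basis_exists[of S] by auto
  then have "vs1.span S = vs1.span B"
    using vs1.span_mono[of B S] vs1.span_mono[of S "vs1.span B"] vs1.span_span[of B] by auto
  moreover have "card (f ` B) = card B"
    using assms card_image[of f B] inj_on_subset[of f "vs1.span S" B] B vs1.span_superset by auto
  moreover have "(f ` B) \<subseteq> (f ` S)"
    using B by auto
  ultimately show ?thesis
    by (metis B(2) B(4) fi dependent_inj_imageD span_image vs2.dim_eq_card_independent vs2.dim_span)
qed

lemma Rinv_linear: "Vector_Spaces.linear fscale fscale (Rinv n)"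
  by unfold_locales (auto simp: Rinv_def fscale_def plus_fun_def fun_eq_iff algebra_simps)

lemma Vinv_subspace: "fs.subspace (Vinv N c)"
proof -
  have "(0::mat \<Rightarrow> real) \<in> Vinv N c" using zero_in by (simp add: Vinv_def invariant_def zero_fun_def)
  moreover have "x + y \<in> Vinv N c" if "x \<in> Vinv N c" "y \<in> Vinv N c" for x y
    using that hom_poly_lin[of x N c y 1] by (simp add: Vinv_def invariant_def plus_fun_def)
  moreover have "fscale a x \<in> Vinv N c" if "x \<in> Vinv N c" for a x
    using that hom_poly_scale[of x N c a] by (simp add: Vinv_def invariant_def fscale_def)
  ultimately show ?thesis unfolding fs.subspace_def by blast
qed

theorem inv_part:
  assumes "2 * c \<le> n" "n \<le> N"
  shows "inv_dim n c = inv_dim N c"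
proof -
  interpret L: Vector_Spaces.linear fscale fscale "Rinv n" by (rule Rinv_linear)
  have im: "Rinv n ` Vinv N c = Vinv n c"
  proof
    show "Rinv n ` Vinv N c \<subseteq> Vinv n c" using Rinv_in[OF assms(2)] by blast
    show "Vinv n c \<subseteq> Rinv n ` Vinv N c"
    proof
      fix p assume p: "p \<in> Vinv n c"
      then have "p = Rinv n (Einv n N c p)" using RE_inv[OF assms p] by simp
      then show "p \<in> Rinv n ` Vinv N c" using Einv_in[OF assms p] by blast
    qed
  qed
  have inj: "inj_on (Rinv n) (fs.span (Vinv N c))"
    unfolding fs.span_eq_iff[THEN iffD2, OF Vinv_subspace]
  proof (rule inj_onI)
    fix P1 P2 assume "P1 \<in> Vinv N c" "P2 \<in> Vinv N c" "Rinv n P1 = Rinv n P2"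
    then show "P1 = P2" using ER_inv[OF assms] by metis
  qed
  have "inv_dim n c = fs.dim (Vinv n c)" by (simp add: inv_dim_def Vinv_def)
  also have "\<dots> = fs.dim (Rinv n ` Vinv N c)" using im by simp
  also have "\<dots> = fs.dim (Vinv N c)" by (rule L.dim_image_eq_gen[OF inj])
  also have "\<dots> = inv_dim N c" by (simp add: inv_dim_def Vinv_def)
  finally show ?thesis .
qed


definition Veq :: "nat \<Rightarrow> nat \<Rightarrow> (mat \<Rightarrow> mat) set" where
  "Veq n c = {P \<in> hom_poly_map n c. equivariant n P}"

definition Req :: "nat \<Rightarrow> (mat \<Rightarrow> mat) \<Rightarrow> mat \<Rightarrow> mat" where
  "Req n P X i j = (if i < n \<and> j < n then P (restr {..<n} X) i j else 0)"

definition Eeq :: "nat \<Rightarrow> nat \<Rightarrow> nat \<Rightarrow> (mat \<Rightarrow> mat) \<Rightarrow> mat \<Rightarrow> mat" where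
  "Eeq n N c Q X i j = (if i < N \<and> j < N then
     (\<Sum>T\<in>TT N c. \<Sum>U\<in>Pow T. (-1) ^ card (T - U) *
        Q (act (tr n N (U \<union> {i, j})) (restr (U \<union> {i, j}) X)) (tr n N (U \<union> {i, j}) i) (tr n N (U \<union> {i, j}) j))
     else 0)"

lemma W_prop:
  assumes "T \<in> TT N c" "U \<in> Pow T" "i < N" "j < N" "2 * c + 2 \<le> n"
  shows "U \<union> {i, j} \<subseteq> {..<N}" "card (U \<union> {i, j}) \<le> n"
proof -
  have U: "U \<subseteq> {..<N}" "card U \<le> 2 * c" using TU_prop[OF assms(1,2)] by auto
  show "U \<union> {i, j} \<subseteq> {..<N}" using U assms(3,4) by auto
  have "card (U \<union> {i, j}) \<le> card U + card {i, j}" by (rule card_Un_le)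
  also have "card {i, j} \<le> 2" by (simp add: card_insert_le_m1)
  finally show "card (U \<union> {i, j}) \<le> n" using U assms(5) by linarith
qed

lemma hpm_comp: "P \<in> hom_poly_map n c \<Longrightarrow> i < n \<Longrightarrow> j < n \<Longrightarrow> (\<lambda>X. P X i j) \<in> hom_poly n c"
  by (simp add: hom_poly_map_def)

lemma hpm_zero: "P \<in> hom_poly_map n c \<Longrightarrow> \<not> (i < n \<and> j < n) \<Longrightarrow> P X i j = 0"
  by (simp add: hom_poly_map_def)

lemma perm_lt: "g permutes {..<n} \<Longrightarrow> (g i < n) = (i < n)"
  using permutes_in_image[of g "{..<n}" i] by simp

lemma Req_in:
  assumes "n \<le> N" "P \<in> Veq N c"
  shows "Req n P \<in> Veq n c"
proof -
  have P: "P \<in> hom_poly_map N c" "equivariant N P" using assms(2) by (auto simp: Veq_def)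
  have "Req n P \<in> hom_poly_map n c"
    unfolding hom_poly_map_def
  proof (intro CollectI conjI allI impI)
    fix i j assume ij: "i < n" "j < n"
    have "(\<lambda>X. P X i j) \<in> hom_poly N c" using hpm_comp[OF P(1)] ij assms(1) by simp
    from H4[OF assms(1) this] show "(\<lambda>X. Req n P X i j) \<in> hom_poly n c" using ij by (simp add: Req_def)
  next
    fix X i j assume "\<not> (i < n \<and> j < n)" then show "Req n P X i j = 0" by (auto simp: Req_def)
  qed
  moreover have "equivariant n (Req n P)"
    unfolding equivariant_def
  proof (intro allI impI)
    fix g X assume g: "g permutes {..<n}"
    then have gN: "g permutes {..<N}" using permutes_subset assms(1) by fastforce
    have ig: "inv g permutes {..<n}" using permutes_inv[OF g] .
    have r: "restr {..<n} (act g X) = act g (restr {..<n} X)"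
      using restr_act[of g "{..<n}" X] perm_inv_image[OF g] permutes_bij[OF g] by simp
    have eq: "P (act g Y) = act g (P Y)" for Y using P(2) gN unfolding equivariant_def by blast
    show "Req n P (act g X) = act g (Req n P X)"
      unfolding fun_eq_iff
    proof (intro allI)
      fix i j
      show "Req n P (act g X) i j = act g (Req n P X) i j"
      proof (cases "i < n \<and> j < n")
        case True
        have "Req n P (act g X) i j = P (act g (restr {..<n} X)) i j" by (simp add: Req_def True r)
        also have "\<dots> = act g (P (restr {..<n} X)) i j" by (simp only: eq)
        also have "\<dots> = Req n P X (inv g i) (inv g j)"
          using True perm_lt[OF ig, of i] perm_lt[OF ig, of j] by (simp add: act_def Req_def)
        also have "\<dots> = act g (Req n P X) i j" by (simp add: act_def)
        finally show ?thesis .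
      next
        case False
        then show ?thesis using perm_lt[OF ig, of i] perm_lt[OF ig, of j] by (auto simp: act_def Req_def)
      qed
    qed
  qed
  ultimately show ?thesis by (simp add: Veq_def)
qed

lemma Eeq_in:
  assumes "2 * c + 2 \<le> n" "n \<le> N" "Q \<in> Veq n c"
  shows "Eeq n N c Q \<in> Veq N c"
proof -
  have Q: "Q \<in> hom_poly_map n c" "equivariant n Q" using assms(3) by (auto simp: Veq_def)
  have trp: "tr n N (U \<union> {i, j}) permutes {..<N}" "tr n N (U \<union> {i, j}) ` (U \<union> {i, j}) \<subseteq> {..<n}"
    if "T \<in> TT N c" "U \<in> Pow T" "i < N" "j < N" for T U i j
    using tr_prop[OF W_prop[OF that assms(1)] assms(2)] by auto
  have "Eeq n N c Q \<in> hom_poly_map N c"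
    unfolding hom_poly_map_def
  proof (intro CollectI conjI allI impI)
    fix i j assume ij: "i < N" "j < N"
    have term_in: "(\<lambda>X. (-1) ^ card (T - U) * Q (act (tr n N (U \<union> {i, j})) (restr (U \<union> {i, j}) X))
          (tr n N (U \<union> {i, j}) i) (tr n N (U \<union> {i, j}) j)) \<in> hom_poly N c"
      if TU: "T \<in> TT N c" "U \<in> Pow T" for T U
    proof -
      let ?h = "tr n N (U \<union> {i, j})"
      have hij: "?h i < n" "?h j < n" using trp(2)[OF TU ij] by auto
      have "(\<lambda>Y. Q Y (?h i) (?h j)) \<in> hom_poly N c"
        using hpm_comp[OF Q(1) hij] H1[OF assms(2)] by blast
      from H2[OF H3[OF this trp(1)[OF TU ij]], of "U \<union> {i, j}"]
      show ?thesis by (rule hom_poly_scale)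
    qed
    have e: "(\<lambda>X. Eeq n N c Q X i j) = (\<lambda>X. \<Sum>T\<in>TT N c. \<Sum>U\<in>Pow T. (-1) ^ card (T - U) *
        Q (act (tr n N (U \<union> {i, j})) (restr (U \<union> {i, j}) X)) (tr n N (U \<union> {i, j}) i) (tr n N (U \<union> {i, j}) j))"
      using ij unfolding Eeq_def by simp
    show "(\<lambda>X. Eeq n N c Q X i j) \<in> hom_poly N c"
      unfolding e by (intro hom_poly_sum term_in) assumption+
  next
    fix X i j assume "\<not> (i < N \<and> j < N)" then show "Eeq n N c Q X i j = 0" by (auto simp: Eeq_def)
  qed
  moreover have "equivariant N (Eeq n N c Q)"
    unfolding equivariant_def
  proof (intro allI impI)
    fix g X assume g: "g permutes {..<N}"
    have bg: "bij g" using permutes_bij[OF g] .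
    have ig: "inv g permutes {..<N}" using permutes_inv[OF g] .
    have injig: "inj (inv g)" using permutes_inj[OF ig] .
    have gi: "g (inv g x) = x" for x using permutes_inverses(1)[OF g] .
    show "Eeq n N c Q (act g X) = act g (Eeq n N c Q X)"
      unfolding fun_eq_iff
    proof (intro allI)
      fix i j
      show "Eeq n N c Q (act g X) i j = act g (Eeq n N c Q X) i j"
      proof (cases "i < N \<and> j < N")
        case False
        then show ?thesis using perm_lt[OF ig, of i] perm_lt[OF ig, of j] by (auto simp: Eeq_def act_def)
      next
        case True
        define i' where "i' = inv g i"
        define j' where "j' = inv g j"
        have ij': "i' < N" "j' < N" using True perm_lt[OF ig] unfolding i'_def j'_def by auto
        define F where "F U = Q (act (tr n N (U \<union> {i', j'})) (restr (U \<union> {i', j'}) X))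
            (tr n N (U \<union> {i', j'}) i') (tr n N (U \<union> {i', j'}) j')" for U
        have tm: "Q (act (tr n N (U \<union> {i, j})) (restr (U \<union> {i, j}) (act g X))) (tr n N (U \<union> {i, j}) i) (tr n N (U \<union> {i, j}) j)
            = F (inv g ` U)" if TU: "T \<in> TT N c" "U \<in> Pow T" for T U
        proof -
          let ?h = "tr n N (U \<union> {i, j})"
          have W': "inv g ` U \<in> Pow (inv g ` T)" "inv g ` T \<in> TT N c"
          proof -
            show "inv g ` U \<in> Pow (inv g ` T)" using TU by auto
            have "card (inv g ` T) = card T" using injig by (simp add: card_image inj_on_subset)
            moreover have "inv g ` T \<subseteq> {..<N}" using TU perm_inv_image[OF g] unfolding TT_def by auto
            ultimately show "inv g ` T \<in> TT N c" using TU unfolding TT_def by auto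
          qed
          have img: "inv g ` (U \<union> {i, j}) = inv g ` U \<union> {i', j'}" unfolding i'_def j'_def by auto
          have "Q (act ?h (restr (U \<union> {i, j}) (act g X))) (?h i) (?h j)
              = Q (act ?h (act g (restr (inv g ` U \<union> {i', j'}) X))) (?h i) (?h j)"
            using restr_act[OF bg, of "U \<union> {i, j}" X] img by simp
          also have "\<dots> = Q (act (?h \<circ> g) (restr (inv g ` U \<union> {i', j'}) X)) ((?h \<circ> g) i') ((?h \<circ> g) j')"
            using act_comp[OF permutes_bij[OF trp(1)[OF TU True[THEN conjunct1] True[THEN conjunct2]]] bg]
            by (simp add: i'_def j'_def gi)
          also have "\<dots> = F (inv g ` U)" unfolding F_def
          proof (rule transport_eq[OF Q(2) assms(2)])
            show "?h \<circ> g permutes {..<N}" using permutes_compose[OF g trp(1)[OF TU True[THEN conjunct1] True[THEN conjunct2]]] .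
            show "(?h \<circ> g) ` (inv g ` U \<union> {i', j'}) \<subseteq> {..<n}"
              using trp(2)[OF TU True[THEN conjunct1] True[THEN conjunct2]] img[symmetric]
              by (simp add: image_comp[symmetric] image_comp gi o_def)
            note tp = tr_prop[OF W_prop[OF W'(2) W'(1) ij' assms(1)] assms(2)]
            show "tr n N (inv g ` U \<union> {i', j'}) permutes {..<N}" using tp(1) .
            show "tr n N (inv g ` U \<union> {i', j'}) ` (inv g ` U \<union> {i', j'}) \<subseteq> {..<n}" using tp(2) .
            show "i' \<in> inv g ` U \<union> {i', j'}" "j' \<in> inv g ` U \<union> {i', j'}" by auto
          qed
          finally show ?thesis .
        qed
        have "Eeq n N c Q (act g X) i j = (\<Sum>T\<in>TT N c. \<Sum>U\<in>Pow T. (-1) ^ card (inv g ` T - inv g ` U) * F (inv g ` U))"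
          unfolding Eeq_def if_P[OF True]
        proof (intro sum.cong refl)
          fix T U assume TU: "T \<in> TT N c" "U \<in> Pow T"
          show "(-1) ^ card (T - U) * Q (act (tr n N (U \<union> {i, j})) (restr (U \<union> {i, j}) (act g X)))
                (tr n N (U \<union> {i, j}) i) (tr n N (U \<union> {i, j}) j)
              = (-1) ^ card (inv g ` T - inv g ` U) * F (inv g ` U)"
            by (simp only: tm[OF TU] card_img_diff[OF injig])
        qed
        also have "\<dots> = (\<Sum>T\<in>TT N c. \<Sum>U\<in>Pow T. (-1) ^ card (T - U) * F U)"
          by (rule reindex_TT[OF ig, where G="\<lambda>T U. (-1) ^ card (T - U) * F U"])
        also have "\<dots> = Eeq n N c Q X i' j'" unfolding Eeq_def F_def using ij' by simp
        also have "\<dots> = act g (Eeq n N c Q X) i j" unfolding act_def i'_def j'_def by simp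
        finally show ?thesis .
      qed
    qed
  qed
  ultimately show ?thesis by (simp add: Veq_def)
qed


lemma RE_eq:
  assumes "2 * c + 2 \<le> n" "n \<le> N" "Q \<in> Veq n c"
  shows "Req n (Eeq n N c Q) = Q"
  unfolding fun_eq_iff
proof (intro allI)
  fix X i j
  have Q: "Q \<in> hom_poly_map n c" "equivariant n Q" using assms(3) by (auto simp: Veq_def)
  show "Req n (Eeq n N c Q) X i j = Q X i j"
  proof (cases "i < n \<and> j < n")
    case False
    then show ?thesis using hpm_zero[OF Q(1) False] by (auto simp: Req_def)
  next
    case True
    then have ijN: "i < N \<and> j < N" using assms(2) by auto
    have cn: "(\<lambda>Y. Q Y i j) \<in> hom_poly n c" using hpm_comp[OF Q(1)] True by blast
    then have cN: "(\<lambda>Y. Q Y i j) \<in> hom_poly N c" using H1[OF assms(2)] by blast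
    have "Req n (Eeq n N c Q) X i j = Eeq n N c Q (restr {..<n} X) i j" using True by (simp add: Req_def)
    also have "\<dots> = (\<Sum>T\<in>TT N c. \<Sum>U\<in>Pow T. (-1) ^ card (T - U) * Q (restr (U \<union> {i, j}) (restr {..<n} X)) i j)"
      unfolding Eeq_def if_P[OF ijN]
    proof (intro sum.cong refl)
      fix T U assume TU: "T \<in> TT N c" "U \<in> Pow T"
      let ?W = "U \<union> {i, j}"
      let ?h = "tr n N ?W"
      note tp = tr_prop[OF W_prop[OF TU ijN[THEN conjunct1] ijN[THEN conjunct2] assms(1)] assms(2)]
      have "Q (act ?h (restr ?W (restr {..<n} X))) (?h i) (?h j) = Q (act ?h (restr (?W \<inter> {..<n}) X)) (?h i) (?h j)"
        by (simp only: restr_restr)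
      also have "\<dots> = Q (act id (restr (?W \<inter> {..<n}) X)) (id i) (id j)"
      proof (rule transport_eq[OF Q(2) assms(2)])
        show "?h permutes {..<N}" by (rule tp(1))
        show "id permutes {..<N}" by simp
        show "?h ` (?W \<inter> {..<n}) \<subseteq> {..<n}" using tp(2) by blast
        show "id ` (?W \<inter> {..<n}) \<subseteq> {..<n}" by auto
        show "i \<in> ?W \<inter> {..<n}" "j \<in> ?W \<inter> {..<n}" using True by auto
      qed
      also have "\<dots> = Q (restr ?W (restr {..<n} X)) i j" by (simp add: act_id restr_restr)
      finally show "(-1) ^ card (T - U) * Q (act ?h (restr ?W (restr {..<n} X))) (?h i) (?h j)
          = (-1) ^ card (T - U) * Q (restr ?W (restr {..<n} X)) i j" by simp
    qed
    also have "\<dots> = Q (restr {..<n} X) i j" using mob_hom[OF cN, of "{i, j}" "restr {..<n} X"] unfolding mob_def .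
    also have "\<dots> = Q X i j" using H5[OF cn] .
    finally show ?thesis .
  qed
qed

lemma ER_eq:
  assumes "2 * c + 2 \<le> n" "n \<le> N" "P \<in> Veq N c"
  shows "Eeq n N c (Req n P) = P"
  unfolding fun_eq_iff
proof (intro allI)
  fix X i j
  have P: "P \<in> hom_poly_map N c" "equivariant N P" using assms(3) by (auto simp: Veq_def)
  show "Eeq n N c (Req n P) X i j = P X i j"
  proof (cases "i < N \<and> j < N")
    case False
    then show ?thesis using hpm_zero[OF P(1) False] by (auto simp: Eeq_def)
  next
    case True
    have cN: "(\<lambda>Y. P Y i j) \<in> hom_poly N c" using hpm_comp[OF P(1)] True by blast
    have "Eeq n N c (Req n P) X i j = (\<Sum>T\<in>TT N c. \<Sum>U\<in>Pow T. (-1) ^ card (T - U) * P (restr (U \<union> {i, j}) X) i j)"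
      unfolding Eeq_def if_P[OF True]
    proof (intro sum.cong refl)
      fix T U assume TU: "T \<in> TT N c" "U \<in> Pow T"
      let ?W = "U \<union> {i, j}"
      let ?h = "tr n N ?W"
      note tp = tr_prop[OF W_prop[OF TU True[THEN conjunct1] True[THEN conjunct2] assms(1)] assms(2)]
      have hij: "?h i < n" "?h j < n" using tp(2) by auto
      have ih: "inv ?h (?h x) = x" for x using permutes_inverses(2)[OF tp(1)] .
      have "Req n P (act ?h (restr ?W X)) (?h i) (?h j) = P (restr {..<n} (act ?h (restr ?W X))) (?h i) (?h j)"
        using hij by (simp add: Req_def)
      also have "\<dots> = P (act ?h (restr ?W X)) (?h i) (?h j)"
        using restr_act_self[OF permutes_bij[OF tp(1)] tp(2)] by simp
      also have "\<dots> = act ?h (P (restr ?W X)) (?h i) (?h j)"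
        using P(2) tp(1) unfolding equivariant_def by simp
      also have "\<dots> = P (restr ?W X) i j" by (simp only: act_def ih)
      finally show "(-1) ^ card (T - U) * Req n P (act ?h (restr ?W X)) (?h i) (?h j)
          = (-1) ^ card (T - U) * P (restr ?W X) i j" by simp
    qed
    also have "\<dots> = P X i j" using mob_hom[OF cN, of "{i, j}" X] unfolding mob_def .
    finally show ?thesis .
  qed
qed

lemma Req_linear: "Vector_Spaces.linear mscale mscale (Req n)"
  by unfold_locales (auto simp: Req_def mscale_def plus_fun_def fun_eq_iff algebra_simps)

lemma Veq_subspace: "ms.subspace (Veq N c)"
proof -
  have "(0::mat \<Rightarrow> mat) \<in> Veq N c"
    using zero_in by (simp add: Veq_def hom_poly_map_def equivariant_def zero_fun_def act_def)
  moreover have "x + y \<in> Veq N c" if "x \<in> Veq N c" "y \<in> Veq N c" for x y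
  proof -
    have "(\<lambda>X. (x + y) X i j) \<in> hom_poly N c" if "i < N" "j < N" for i j
      using hom_poly_lin[of "\<lambda>X. x X i j" N c "\<lambda>X. y X i j" 1] hpm_comp[of x N c i j] hpm_comp[of y N c i j]
        \<open>x \<in> Veq N c\<close> \<open>y \<in> Veq N c\<close> that by (simp add: Veq_def plus_fun_def)
    then show ?thesis using that
      by (simp add: Veq_def hom_poly_map_def equivariant_def plus_fun_def act_def)
  qed
  moreover have "mscale a x \<in> Veq N c" if "x \<in> Veq N c" for a x
  proof -
    have "(\<lambda>X. mscale a x X i j) \<in> hom_poly N c" if "i < N" "j < N" for i j
      using hom_poly_scale[of "\<lambda>X. x X i j" N c a] hpm_comp[of x N c i j] \<open>x \<in> Veq N c\<close> that
      by (simp add: Veq_def mscale_def)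
    then show ?thesis using that
      by (simp add: Veq_def hom_poly_map_def equivariant_def mscale_def act_def)
  qed
  ultimately show ?thesis unfolding ms.subspace_def by blast
qed

theorem eq_part:
  assumes "2 * c + 2 \<le> n" "n \<le> N"
  shows "equiv_dim n c = equiv_dim N c"
proof -
  interpret L: Vector_Spaces.linear mscale mscale "Req n" by (rule Req_linear)
  have im: "Req n ` Veq N c = Veq n c"
  proof
    show "Req n ` Veq N c \<subseteq> Veq n c" using Req_in[OF assms(2)] by blast
    show "Veq n c \<subseteq> Req n ` Veq N c"
    proof
      fix p assume p: "p \<in> Veq n c"
      then have "p = Req n (Eeq n N c p)" using RE_eq[OF assms p] by simp
      then show "p \<in> Req n ` Veq N c" using Eeq_in[OF assms p] by blast
    qed
  qed
  have inj: "inj_on (Req n) (ms.span (Veq N c))"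
    unfolding ms.span_eq_iff[THEN iffD2, OF Veq_subspace]
  proof (rule inj_onI)
    fix P1 P2 assume "P1 \<in> Veq N c" "P2 \<in> Veq N c" "Req n P1 = Req n P2"
    then show "P1 = P2" using ER_eq[OF assms] by metis
  qed
  have "equiv_dim n c = ms.dim (Veq n c)" by (simp add: equiv_dim_def Veq_def)
  also have "\<dots> = ms.dim (Req n ` Veq N c)" using im by simp
  also have "\<dots> = ms.dim (Veq N c)" by (rule L.dim_image_eq_gen[OF inj])
  also have "\<dots> = equiv_dim N c" by (simp add: equiv_dim_def Veq_def)
  finally show ?thesis .
qed

theorem mainTheorem10:
  fixes n N :: nat
  assumes "n \<ge> 1" and "N \<ge> n"
  shows "(\<forall>c. c \<le> n div 2 \<longrightarrow> inv_dim n c = inv_dim N c)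
       \<and> (\<forall>c. int c \<le> int (n div 2) - 1 \<longrightarrow> equiv_dim n c = equiv_dim N c)"
proof (intro conjI allI impI)
  fix c assume "c \<le> n div 2"
  then have "2 * c \<le> n" by linarith
  then show "inv_dim n c = inv_dim N c" using inv_part assms(2) by blast
next
  fix c assume "int c \<le> int (n div 2) - 1"
  then have "2 * c + 2 \<le> n" by linarith
  then show "equiv_dim n c = equiv_dim N c" using eq_part assms(2) by blast
qed

end
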